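(* Let $n,d\ge1$, $K\in\{1,\dots,d\}$, $0<\mu\le L\le L_{\max}\le nL$ and $r\in[0,1]$. Let the worker compressors be Rand$K_\omega$ and the server compressor Top$K_\alpha$ with (i) $K_\omega=K$ and $K_\alpha=\min\{\lceil\frac{1-r}{r}K\rceil,d\}$ if $r\in[0,\frac12]$, (ii) $K_\omega=\min\{\lceil\frac{r}{1-r}K\rceil,d\}$ and $K_\alpha=K$ if $r\in(\frac12,1]$; correspondingly $\omega=\frac{d}{K_\omega}-1$ and $\alpha=\frac{K_\alpha}{d}$. With $K^r=(1-r)K_\omega+rK_\alpha$, $\mu^r_{\omega,\alpha}=rd/K^r$ and $$\mathfrak m^r_{\mathrm{realistic}}=K^r\Big(\sqrt{\tfrac{L\max\{\omega+1,\mu^r_{\omega,\alpha}\}}{\alpha\mu}}+\sqrt{\tfrac{L_{\max}\omega\max\{\omega+1,\mu^r_{\omega,\alpha}\}}{n\mu}}+\tfrac1\alpha+\omega+\mu^r_{\omega,\alpha}\Big)+d,$$ we have $\mathfrak m^r_{\mathrm{realistic}}=\widetilde{\mathcal O}(\mathfrak m_{\mathrm{AGD}})$ with $\mathfrak m_{\mathrm{AGD}}=d\sqrt{L/\mu}$, i.e. $\mathfrak m^r_{\mathrm{realistic}}\le C\,d\sqrt{L/\mu}$ for a universal constant $C$ (up to logarithmic factors).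
   Context: Rand$K$: the unbiased compressor that keeps $K$ uniformly random coordinates of its input scaled by $d/K$ (variance parameter $\omega=d/K-1$). Top$K$: the biased compressor keeping the $K$ largest-magnitude coordinates (contraction parameter $\alpha=K/d$). $\mathfrak m^r_{\mathrm{realistic}}$ is (up to logarithmic factors) the total communication complexity $(1-r)\cdot(\text{worker-to-server cost})+r\cdot(\text{server-to-worker cost})$ of the method 2Direction for minimizing $f=\frac1n\sum_if_i$ on $\mathbb R^d$ ($f_i$ $L_i$-smooth convex, $L_{\max}=\max_iL_i$, $f$ $L$-smooth and $\mu$-strongly convex), and $d\sqrt{L/\mu}$ is (up to logarithmic factors) that of accelerated gradient descent with uncompressed communication. *)

theory Defs
  imports Complex_Main
begin

text \<open>Number of coordinates kept by the worker compressor Rand K_omega.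
  For r = 1 the ratio r/(1-r) is +infinity, so the cap d applies.\<close>
definition K_omega :: "nat \<Rightarrow> nat \<Rightarrow> real \<Rightarrow> nat" where
  "K_omega d K r =
     (if r \<le> 1/2 then K
      else if r = 1 then d
      else min (nat \<lceil>r / (1 - r) * real K\<rceil>) d)"

text \<open>Number of coordinates kept by the server compressor Top K_alpha.
  For r = 0 the ratio (1-r)/r is +infinity, so the cap d applies.\<close>
definition K_alpha :: "nat \<Rightarrow> nat \<Rightarrow> real \<Rightarrow> nat" where
  "K_alpha d K r =
     (if r \<le> 1/2 then (if r = 0 then d else min (nat \<lceil>(1 - r) / r * real K\<rceil>) d)
      else K)"

definition omega_par :: "nat \<Rightarrow> nat \<Rightarrow> real \<Rightarrow> real" where
  "omega_par d K r = real d / real (K_omega d K r) - 1"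

definition alpha_par :: "nat \<Rightarrow> nat \<Rightarrow> real \<Rightarrow> real" where
  "alpha_par d K r = real (K_alpha d K r) / real d"

definition K_r :: "nat \<Rightarrow> nat \<Rightarrow> real \<Rightarrow> real" where
  "K_r d K r = (1 - r) * real (K_omega d K r) + r * real (K_alpha d K r)"

definition mu_r :: "nat \<Rightarrow> nat \<Rightarrow> real \<Rightarrow> real" where
  "mu_r d K r = r * real d / K_r d K r"

definition m_realistic ::
  "nat \<Rightarrow> nat \<Rightarrow> nat \<Rightarrow> real \<Rightarrow> real \<Rightarrow> real \<Rightarrow> real \<Rightarrow> real" where
  "m_realistic n d K L Lmax \<mu> r =
     (let \<omega> = omega_par d K r; \<alpha> = alpha_par d K r; M = mu_r d K r;
          mx = max (\<omega> + 1) M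
      in K_r d K r * (sqrt (L * mx / (\<alpha> * \<mu>))
                     + sqrt (Lmax * \<omega> * mx / (real n * \<mu>))
                     + 1 / \<alpha> + \<omega> + M) + real d)"

end

theory Submission
  imports Defs
begin

lemma sqA: "0 \<le> (A::real) \<Longrightarrow> sqrt (A^2 * X) = A * sqrt X"
  by (simp add: real_sqrt_mult)

lemma core:
  fixes k kw ka A r d L Lmax \<mu> nn :: real
  assumes k1: "1 \<le> k" and h1: "k \<le> kw" and h2: "kw \<le> d" and h3: "k \<le> ka" and h4: "ka \<le> d"
    and r0: "0 \<le> r" and r1: "r \<le> 1" and hA1: "r*k \<le> A" and hA2: "A \<le> 3*k" and hA0: "0 < A"
    and mu0: "0 < \<mu>" and muL: "\<mu> \<le> L" and LL: "L \<le> Lmax" and Ln: "Lmax \<le> nn*L" and n1: "1 \<le> nn"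
  shows "A * (sqrt (L * max (d/kw - 1 + 1) (r*d/A) / (ka/d * \<mu>))
           + sqrt (Lmax * (d/kw - 1) * max (d/kw - 1 + 1) (r*d/A) / (nn*\<mu>))
           + 1/(ka/d) + (d/kw - 1) + r*d/A) + d \<le> 14 * d * sqrt (L/\<mu>)"
proof -
  define \<kappa> where "\<kappa> = L/\<mu>"
  have k1': "1 \<le> \<kappa>" using mu0 muL by (simp add: \<kappa>_def)
  have sk: "1 \<le> sqrt \<kappa>" using k1' by simp
  have kp: "0 < k" "0 < kw" "0 < ka" "0 < d" using k1 h1 h3 h2 by linarith+
  define mx where "mx = max (d/kw - 1 + 1) (r*d/A)"
  have mx1: "d/kw \<le> d/k" using kp h1 by (simp add: frac_le)
  have mx2: "r*d/A \<le> d/k"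
  proof -
    have "r*d*k \<le> d*A" using hA1 kp by (metis mult.commute mult.left_commute mult_left_mono less_imp_le)
    then show ?thesis using kp hA0 by (simp add: divide_simps mult.commute)
  qed
  have mxle: "mx \<le> d/k" using mx1 mx2 by (simp add: mx_def)
  have mx0: "0 \<le> mx" using kp by (simp add: mx_def le_max_iff_disj)
  have om0: "0 \<le> d/kw - 1" using kp h2 by simp
  have omle: "d/kw - 1 \<le> d/k" using mx1 by linarith
  have A2: "A^2 \<le> (3*k)^2" using hA0 hA2 by (intro power_mono) auto
  have T1: "A * sqrt (L*mx/(ka/d*\<mu>)) \<le> 3*d*sqrt \<kappa>"
  proof -
    have e: "L*mx/(ka/d*\<mu>) = \<kappa>*mx*d/ka" using kp mu0 by (simp add: \<kappa>_def field_simps)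
    have "A^2 * (\<kappa>*mx*d/ka) \<le> (3*k)^2 * (\<kappa>*(d/k)*d/ka)"
    proof (rule mult_mono[OF A2])
      have "\<kappa>*mx \<le> \<kappa>*(d/k)" using mxle k1' by (intro mult_left_mono) auto
      then have "\<kappa>*mx*d \<le> \<kappa>*(d/k)*d" using kp by (intro mult_right_mono) auto
      then show "\<kappa>*mx*d/ka \<le> \<kappa>*(d/k)*d/ka" using kp by (intro divide_right_mono) auto
      show "0 \<le> (3*k)^2" by simp
      show "0 \<le> \<kappa>*mx*d/ka" using kp mx0 k1' by simp
    qed
    also have "\<dots> = 9*\<kappa>*d^2*(k/ka)" using kp by (simp add: field_simps power2_eq_square)
    also have "\<dots> \<le> 9*\<kappa>*d^2" proof -
      have "k/ka \<le> 1" using kp h3 by simp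
      then show ?thesis using k1' by (intro mult_left_le) auto
    qed
    finally have "A^2 * (\<kappa>*mx*d/ka) \<le> (3*d*sqrt \<kappa>)^2" using k1' by (simp add: power_mult_distrib algebra_simps)
    then have "sqrt (A^2 * (\<kappa>*mx*d/ka)) \<le> 3*d*sqrt \<kappa>" using kp k1' by (simp add: real_sqrt_le_iff real_le_lsqrt)
    then show ?thesis using sqA[of A "\<kappa>*mx*d/ka"] hA0 e by simp
  qed
  have T2: "A * sqrt (Lmax * (d/kw - 1) * mx / (nn*\<mu>)) \<le> 3*d*sqrt \<kappa>"
  proof -
    have "Lmax/nn \<le> L" using Ln n1 by (simp add: divide_simps mult.commute)
    then have "Lmax * (d/kw - 1) * mx / (nn*\<mu>) = (Lmax/nn)/\<mu> * ((d/kw - 1) * mx)" by simp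
    also have "\<dots> \<le> \<kappa> * ((d/kw - 1) * mx)"
      unfolding \<kappa>_def using om0 mx0 mu0 \<open>Lmax/nn \<le> L\<close>
      by (intro mult_right_mono divide_right_mono) auto
    also have "\<dots> \<le> \<kappa> * ((d/k) * (d/k))"
      using om0 mx0 omle mxle k1' by (intro mult_left_mono mult_mono) auto
    finally have X: "Lmax * (d/kw - 1) * mx / (nn*\<mu>) \<le> \<kappa> * ((d/k) * (d/k))" .
    have X0: "0 \<le> Lmax * (d/kw - 1) * mx / (nn*\<mu>)" using om0 mx0 mu0 n1 LL muL by simp
    have "A^2 * (Lmax * (d/kw - 1) * mx / (nn*\<mu>)) \<le> (3*k)^2 * (\<kappa> * ((d/k) * (d/k)))"
      by (rule mult_mono[OF A2 X]) (use X0 in auto)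
    also have "\<dots> = (3*d*sqrt \<kappa>)^2" using kp k1' by (simp add: field_simps power2_eq_square)
    finally have "sqrt (A^2 * (Lmax * (d/kw - 1) * mx / (nn*\<mu>))) \<le> 3*d*sqrt \<kappa>"
      using kp k1' by (simp add: real_sqrt_le_iff real_le_lsqrt)
    then show ?thesis using sqA[of A "Lmax * (d/kw - 1) * mx / (nn*\<mu>)"] hA0 by simp
  qed
  have T3: "A * (1/(ka/d)) \<le> 3*d"
  proof -
    have "A * (1/(ka/d)) = A*d/ka" by simp
    also have "\<dots> \<le> 3*k*d/ka" using hA2 kp by (simp add: divide_right_mono)
    also have "\<dots> \<le> 3*d" using kp h3 by (simp add: divide_simps)
    finally show ?thesis .
  qed
  have T4: "A * (d/kw - 1) \<le> 3*d"
  proof -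
    have "A * (d/kw - 1) \<le> A*d/kw" using hA0 by (simp add: algebra_simps)
    also have "\<dots> \<le> 3*k*d/kw" using hA2 kp by (simp add: divide_right_mono)
    also have "\<dots> \<le> 3*d" using kp h1 by (simp add: divide_simps)
    finally show ?thesis .
  qed
  have T5: "A * (r*d/A) \<le> d" using hA0 r1 kp by simp
  have D: "d \<le> d * sqrt \<kappa>" using sk kp by simp
  have "A * (sqrt (L * mx / (ka/d * \<mu>)) + sqrt (Lmax * (d/kw - 1) * mx / (nn*\<mu>))
           + 1/(ka/d) + (d/kw - 1) + r*d/A) + d
        = A * sqrt (L * mx / (ka/d * \<mu>)) + A * sqrt (Lmax * (d/kw - 1) * mx / (nn*\<mu>))
           + A*(1/(ka/d)) + A*(d/kw - 1) + A*(r*d/A) + d" by (simp add: algebra_simps)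
  also have "\<dots> \<le> 14 * d * sqrt \<kappa>" proof -
    have "3*d*sqrt \<kappa> = 3*(d*sqrt \<kappa>)" "14*d*sqrt \<kappa> = 14*(d*sqrt \<kappa>)" by simp_all
    then show ?thesis using T1 T2 T3 T4 T5 D by linarith
  qed
  finally show ?thesis unfolding mx_def \<kappa>_def .
qed

lemma ceil_bounds: "x \<le> real (nat \<lceil>x\<rceil>)" "0 \<le> x \<Longrightarrow> real (nat \<lceil>x\<rceil>) < x + 1"
  by linarith+

lemma bounds:
  assumes K1: "1 \<le> K" and Kd: "K \<le> d" and r0: "0 \<le> r" and r1: "r \<le> (1::real)"
  shows "real K \<le> real (K_omega d K r) \<and> K_omega d K r \<le> d \<and> real K \<le> real (K_alpha d K r)
    \<and> K_alpha d K r \<le> d \<and> r * real K \<le> K_r d K r \<and> K_r d K r \<le> 3 * real K \<and> 0 < K_r d K r"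
proof (cases "r \<le> 1/2")
  case True
  have Kw: "K_omega d K r = K" using True by (simp add: K_omega_def)
  show ?thesis
  proof (cases "r = 0")
    case True
    then show ?thesis using Kd K1 by (simp add: K_omega_def K_alpha_def K_r_def)
  next
    case False
    then have rp: "0 < r" using r0 by simp
    define c where "c = (1-r)/r * real K"
    have rc: "r * c = (1-r) * real K" using rp by (simp add: c_def)
    have cK: "real K \<le> c"
    proof -
      have "1 \<le> (1-r)/r" using rp True by (simp add: divide_simps)
      then show ?thesis unfolding c_def using K1 by (metis mult_le_cancel_right1 of_nat_0_le_iff order_trans linorder_not_le mult_right_mono mult_1)
    qed
    have Ka: "K_alpha d K r = min (nat \<lceil>c\<rceil>) d" using True False by (simp add: K_alpha_def c_def)
    define x where "x = real (K_alpha d K r)"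
    have "real K \<le> real (nat \<lceil>c\<rceil>)" using cK ceil_bounds(1)[of c] by linarith
    then have "K \<le> nat \<lceil>c\<rceil>" by linarith
    then have x1: "real K \<le> x" using Ka Kd by (auto simp: x_def)
    have x2: "x < c + 1" using Ka cK ceil_bounds(2)[of c] K1 by (auto simp: x_def)
    have "r * x \<le> r * (c+1)" using x2 rp by (intro mult_left_mono) auto
    then have rx: "r * x \<le> (1-r) * real K + r" using rc by (simp add: algebra_simps)
    have Kr: "K_r d K r = (1-r) * real K + r * x" using Kw by (simp add: K_r_def x_def)
    have rK: "0 \<le> r * real K" "r * real K \<le> real K" using r0 r1 by (auto simp: mult_left_le_one_le)
    have "r * real K \<le> (1 - r) * real K" using True by (intro mult_right_mono) auto
    moreover have "0 \<le> r * x" using rp x1 K1 by simp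
    ultimately have "r * real K \<le> K_r d K r" "K_r d K r \<le> 3 * real K" "0 < K_r d K r"
      using Kr rx rK K1 r1 True unfolding left_diff_distrib by linarith+
    then show ?thesis using Kw Ka x1 K1 Kd by (auto simp: x_def)
  qed
next
  case False
  have Ka: "K_alpha d K r = K" using False by (simp add: K_alpha_def)
  show ?thesis
  proof (cases "r = 1")
    case True
    then show ?thesis using Kd K1 False by (simp add: K_omega_def K_alpha_def K_r_def)
  next
    case r1': False
    then have rp: "r < 1" using r1 by simp
    define c where "c = r/(1-r) * real K"
    have rc: "(1-r) * c = r * real K" using rp by (simp add: c_def)
    have cK: "real K \<le> c"
    proof -
      have "1 \<le> r/(1-r)" using rp False by (simp add: divide_simps)
      then show ?thesis unfolding c_def using K1 by (metis mult_le_cancel_right1 of_nat_0_le_iff order_trans linorder_not_le mult_right_mono mult_1)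
    qed
    have Kw: "K_omega d K r = min (nat \<lceil>c\<rceil>) d" using False r1' by (simp add: K_omega_def c_def)
    define x where "x = real (K_omega d K r)"
    have "real K \<le> real (nat \<lceil>c\<rceil>)" using cK ceil_bounds(1)[of c] by linarith
    then have "K \<le> nat \<lceil>c\<rceil>" by linarith
    then have x1: "real K \<le> x" using Kw Kd by (auto simp: x_def)
    have x2: "x < c + 1" using Kw cK ceil_bounds(2)[of c] K1 by (auto simp: x_def)
    have "(1-r) * x \<le> (1-r) * (c+1)" using x2 rp by (intro mult_left_mono) auto
    then have rx: "(1-r) * x \<le> r * real K + (1 - r)" using rc by (simp add: algebra_simps)
    have Kr: "K_r d K r = (1-r) * x + r * real K" using Ka by (simp add: K_r_def x_def)
    have rK: "0 \<le> r * real K" "r * real K \<le> real K" using r0 r1 by (auto simp: mult_left_le_one_le)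
    have "0 \<le> (1-r) * x" using rp x1 K1 by simp
    moreover have "r \<le> r * real K" using K1 r0 by (simp add: mult_le_cancel_left1)
    ultimately have "r * real K \<le> K_r d K r" "K_r d K r \<le> 3 * real K" "0 < K_r d K r"
      using Kr rx rK K1 r1 False unfolding left_diff_distrib by linarith+
    then show ?thesis using Kw Ka x1 K1 Kd by (auto simp: x_def)
  qed
qed

theorem theorem5:
  shows "\<exists>C::real. C > 0 \<and>
    (\<forall>(n::nat) (d::nat) (K::nat) (\<mu>::real) (L::real) (Lmax::real) (r::real).
       1 \<le> n \<longrightarrow> 1 \<le> d \<longrightarrow> 1 \<le> K \<longrightarrow> K \<le> d \<longrightarrow>
       0 < \<mu> \<longrightarrow> \<mu> \<le> L \<longrightarrow> L \<le> Lmax \<longrightarrow> Lmax \<le> real n * L \<longrightarrow>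
       0 \<le> r \<longrightarrow> r \<le> 1 \<longrightarrow>
       m_realistic n d K L Lmax \<mu> r \<le> C * real d * sqrt (L / \<mu>))"
proof (intro exI[of _ 14] conjI allI impI)
  fix n d K :: nat and \<mu> L Lmax r :: real
  assume a: "1 \<le> n" "1 \<le> d" "1 \<le> K" "K \<le> d" "0 < \<mu>" "\<mu> \<le> L" "L \<le> Lmax"
    "Lmax \<le> real n * L" "0 \<le> r" "r \<le> 1"
  note b = bounds[OF a(3) a(4) a(9) a(10)]
  have "K_r d K r * (sqrt (L * max (real d / real (K_omega d K r) - 1 + 1) (r * real d / K_r d K r) / (real (K_alpha d K r) / real d * \<mu>))
           + sqrt (Lmax * (real d / real (K_omega d K r) - 1) * max (real d / real (K_omega d K r) - 1 + 1) (r * real d / K_r d K r) / (real n * \<mu>))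
           + 1 / (real (K_alpha d K r) / real d) + (real d / real (K_omega d K r) - 1) + r * real d / K_r d K r) + real d
        \<le> 14 * real d * sqrt (L / \<mu>)"
    apply (rule core[where k="real K"])
    using a b by auto
  then show "m_realistic n d K L Lmax \<mu> r \<le> 14 * real d * sqrt (L / \<mu>)"
    by (simp add: m_realistic_def Let_def omega_par_def alpha_par_def mu_r_def)
qed (simp)

end
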